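(* Let $T:I\to I$, $I=[0,1]$, be a piecewise expanding map as in the context satisfying (PE1)–(PE4), with absolutely continuous invariant ergodic probability measure $\mu$. Then $\mu$-almost every point $x\in I$ is Diophantine, i.e. there exist $\epsilon=\epsilon(x)>0$ and $\rho_0=\rho_0(x)>0$ such that for all $\rho\le\rho_0$ and all integers $0<k\le\epsilon|\ln\rho|$, $T^{-k}B(x,\rho)\cap B(x,\rho)=\emptyset$.
   Context: $T$ has a finite or countable set of singular points $\mathcal{S}=\{a_j\}$, $1=a_0>a_1>\cdots>a_N=0$ ($N\le\infty$); on each $\Delta_j=(a_{j+1},a_j)$, $T$ is $C^3$ and strictly monotone; there are $C>0$, $\lambda>1$ with $|(T^n)'(x)|\ge C\lambda^n$ whenever defined; $T$ is surjective and topologically exact (every subinterval $J\subset I\setminus\mathcal{S}$ has $T^n(J)=I$ for some $n\ge1$). $m$ is Lebesgue measure, $d$ the usual distance, $B(x,\rho)=\{y:d(x,y)<\rho\}$. (PE1) there is $C>0$ with $|T''(x)|/|T'(x)|^2<C$ for all $i$, $x\in\Delta_i$; (PE2) there is $\delta>0$ with $m(T(\Delta_i))>\delta$ for all $i$; under these $T$ has a unique absolutely continuous ergodic invariant probability measure $\mu$; (PE3) $\int\log|T'|\,d\mu=\Lambda_0<\infty$; (PE4) $\mu(\{x:d(x,\mathcal{S})<\varepsilon\})<C\varepsilon^\gamma$ for some $C,\gamma>0$ and all $\varepsilon>0$. *)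

theory Defs
  imports "HOL-Probability.Probability"
begin

abbreviation unit_I :: "real set" where "unit_I \<equiv> {0..1}"

definition sing_points_ok :: "(nat \<Rightarrow> real) \<Rightarrow> enat \<Rightarrow> bool" where
  "sing_points_ok a N \<longleftrightarrow>
     a 0 = 1 \<and> N \<noteq> 0 \<and>
     (\<forall>j. enat (Suc j) \<le> N \<longrightarrow> a (Suc j) < a j) \<and>
     (\<forall>n. N = enat n \<longrightarrow> a n = 0) \<and>
     (N = \<infinity> \<longrightarrow> a \<longlonglongrightarrow> 0)"

definition sing_set :: "(nat \<Rightarrow> real) \<Rightarrow> enat \<Rightarrow> real set" where
  "sing_set a N = {a j | j. enat j \<le> N} \<union> {0}"

definition branch :: "(nat \<Rightarrow> real) \<Rightarrow> nat \<Rightarrow> real set" where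
  "branch a j = {a (Suc j)<..<a j}"

definition C3_on :: "(real \<Rightarrow> real) \<Rightarrow> real set \<Rightarrow> bool" where
  "C3_on f U \<longleftrightarrow>
     (\<forall>x\<in>U. \<forall>k<3. ((deriv ^^ k) f has_real_derivative (deriv ^^ Suc k) f x) (at x)) \<and>
     continuous_on U ((deriv ^^ 3) f)"

definition piecewise_expanding :: "(real \<Rightarrow> real) \<Rightarrow> (nat \<Rightarrow> real) \<Rightarrow> enat \<Rightarrow> bool" where
  "piecewise_expanding T a N \<longleftrightarrow>
     sing_points_ok a N \<and>
     (\<forall>x\<in>unit_I. T x \<in> unit_I) \<and>
     T ` unit_I = unit_I \<and>
     (\<forall>j. enat j < N \<longrightarrow> C3_on T (branch a j) \<and>
            (strict_mono_on (branch a j) T \<or> strict_mono_on (branch a j) (\<lambda>x. - T x))) \<and>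
     (\<exists>C>0. \<exists>lam>1. \<forall>n x. (\<forall>i<n. (T ^^ i) x \<in> unit_I - sing_set a N) \<longrightarrow>
            \<bar>deriv (T ^^ n) x\<bar> \<ge> C * lam ^ n) \<and>
     (\<forall>u v. u < v \<and> {u<..<v} \<subseteq> unit_I - sing_set a N \<longrightarrow>
            (\<exists>n\<ge>1. {0<..<1} \<subseteq> (T ^^ n) ` {u<..<v}))"

definition PE1 :: "(real \<Rightarrow> real) \<Rightarrow> (nat \<Rightarrow> real) \<Rightarrow> enat \<Rightarrow> bool" where
  "PE1 T a N \<longleftrightarrow> (\<exists>C>0. \<forall>j. enat j < N \<longrightarrow> (\<forall>x\<in>branch a j.
      \<bar>deriv (deriv T) x\<bar> / \<bar>deriv T x\<bar>^2 < C))"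

definition PE2 :: "(real \<Rightarrow> real) \<Rightarrow> (nat \<Rightarrow> real) \<Rightarrow> enat \<Rightarrow> bool" where
  "PE2 T a N \<longleftrightarrow> (\<exists>\<delta>>0. \<forall>j. enat j < N \<longrightarrow> measure lebesgue (T ` branch a j) > \<delta>)"

definition acip_ergodic :: "(real \<Rightarrow> real) \<Rightarrow> real measure \<Rightarrow> bool" where
  "acip_ergodic T \<mu> \<longleftrightarrow>
     prob_space \<mu> \<and> sets \<mu> = sets borel \<and> emeasure \<mu> unit_I = 1 \<and>
     absolutely_continuous lborel \<mu> \<and>
     T \<in> measurable \<mu> \<mu> \<and> distr \<mu> \<mu> T = \<mu> \<and>
     (\<forall>A\<in>sets borel. T -` A \<inter> unit_I = A \<inter> unit_I \<longrightarrow>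
          emeasure \<mu> A = 0 \<or> emeasure \<mu> A = 1)"

definition PE3 :: "(real \<Rightarrow> real) \<Rightarrow> real measure \<Rightarrow> bool" where
  "PE3 T \<mu> \<longleftrightarrow> integrable \<mu> (\<lambda>x. ln \<bar>deriv T x\<bar>)"

definition PE4 :: "real measure \<Rightarrow> real set \<Rightarrow> bool" where
  "PE4 \<mu> S \<longleftrightarrow> (\<exists>C>0. \<exists>\<gamma>>0. \<forall>\<epsilon>>0.
      measure \<mu> {x. infdist x S < \<epsilon>} < C * \<epsilon> powr \<gamma>)"

definition diophantine :: "(real \<Rightarrow> real) \<Rightarrow> real \<Rightarrow> bool" where
  "diophantine T x \<longleftrightarrow> (\<exists>\<epsilon>>0. \<exists>\<rho>0>0. \<forall>\<rho>. 0 < \<rho> \<and> \<rho> \<le> \<rho>0 \<longrightarrow>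
      (\<forall>k::nat. 0 < k \<and> real k \<le> \<epsilon> * \<bar>ln \<rho>\<bar> \<longrightarrow>
         {y\<in>unit_I. (T ^^ k) y \<in> ball x \<rho>} \<inter> ball x \<rho> = {}))"

end

theory Submission
  imports Defs
begin

locale pe =
  fixes T :: "real \<Rightarrow> real" and a :: "nat \<Rightarrow> real" and N :: enat and \<mu> :: "real measure"
    and C0 lam C1 Cp gam :: real
  assumes sp: "sing_points_ok a N"
  and TI: "\<And>x. x \<in> {0..1} \<Longrightarrow> T x \<in> {0..1}"
  and C3: "\<And>j. enat j < N \<Longrightarrow> C3_on T (branch a j)"
  and C0: "C0 > 0" and lam: "lam > 1"
  and expand: "\<And>n x. (\<forall>i<n. (T ^^ i) x \<in> {0..1} - sing_set a N) \<Longrightarrow> \<bar>deriv (T ^^ n) x\<bar> \<ge> C0 * lam ^ n"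
  and C1: "C1 > 0"
  and pe1: "\<And>j x. enat j < N \<Longrightarrow> x \<in> branch a j \<Longrightarrow> \<bar>deriv (deriv T) x\<bar> / \<bar>deriv T x\<bar>^2 < C1"
  and acip: "acip_ergodic T \<mu>"
  and Cp: "Cp > 0" and gam: "gam > 0"
  and pe4: "\<And>e. e > 0 \<Longrightarrow> measure \<mu> {x. infdist x (sing_set a N) < e} < Cp * e powr gam"
begin

abbreviation "S \<equiv> sing_set a N"

lemma a0: "a 0 = 1" using sp by (simp add: sing_points_ok_def)

lemma S_a: "enat j \<le> N \<Longrightarrow> a j \<in> S" by (auto simp: sing_set_def)
lemma S_0: "0 \<in> S" by (auto simp: sing_set_def)

lemma S_countable: "countable S"
proof -
  have "S \<subseteq> insert 0 (range a)" by (auto simp: sing_set_def)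
  then show ?thesis by (meson countable_image countable_insert countable_subset uncountable_UNIV_real
      countableI_type)
qed

lemma S_closed: "closed S"
proof (cases N)
  case (enat n)
  have "S \<subseteq> insert 0 (a ` {..n})" using enat by (auto simp: sing_set_def)
  then have "finite S" by (meson finite_atMost finite_imageI finite_insert finite_subset)
  then show ?thesis by (simp add: finite_imp_closed)
next
  case infinity
  then have "a \<longlonglongrightarrow> 0" using sp by (simp add: sing_points_ok_def)
  then have "compact (insert 0 (range a))" by (rule compact_sequence_with_limit)
  moreover have "S = insert 0 (range a)" using infinity by (auto simp: sing_set_def)
  ultimately show ?thesis by (simp add: compact_imp_closed)
qed

lemma branch_exists:
  assumes z: "z \<in> {0..1}" "z \<notin> S"
  shows "\<exists>j. enat j < N \<and> a (Suc j) < z \<and> z < a j"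
proof -
  have z0: "z > 0" using z S_0 by (cases "z = 0") auto
  have "\<exists>i. a i < z \<and> enat i \<le> N"
  proof (cases N)
    case (enat n)
    then have "a n = 0" using sp by (simp add: sing_points_ok_def)
    then show ?thesis using z0 enat by (intro exI[of _ n]) auto
  next
    case infinity
    then have "a \<longlonglongrightarrow> 0" using sp by (simp add: sing_points_ok_def)
    then have "eventually (\<lambda>i. a i < z) sequentially" using z0 by (simp add: order_tendstoD(2))
    then obtain i where "a i < z" by (meson eventually_sequentially order_refl)
    then show ?thesis using infinity by auto
  qed
  define i0 where "i0 = (LEAST i. a i < z \<and> enat i \<le> N)"
  have i0: "a i0 < z" "enat i0 \<le> N" using LeastI_ex[OF \<open>\<exists>i. a i < z \<and> enat i \<le> N\<close>]
    unfolding i0_def by auto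
  have "i0 \<noteq> 0" using i0 a0 z by (metis atLeastAtMost_iff not_less)
  then obtain j where j: "i0 = Suc j" using not0_implies_Suc by blast
  have jN: "enat j < N" using i0(2) j by (metis Suc_ile_eq)
  have "\<not> (a j < z \<and> enat j \<le> N)" using not_less_Least[of j "\<lambda>i. a i < z \<and> enat i \<le> N"] j
    unfolding i0_def by auto
  then have "a j \<ge> z" using jN by (auto simp: order_less_imp_le)
  moreover have "a j \<noteq> z" using z S_a[of j] jN by (auto simp: order_less_imp_le)
  ultimately show ?thesis using jN i0 j by auto
qed

lemma branch_dist:
  assumes "enat j < N" "a (Suc j) < z" "z < a j"
  shows "infdist z S \<le> a j - z" "infdist z S \<le> z - a (Suc j)"
proof -
  have "a j \<in> S" using assms(1) S_a by (simp add: order_less_imp_le)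
  then show "infdist z S \<le> a j - z" using infdist_le[of "a j" S z] assms by (simp add: dist_real_def)
  have "a (Suc j) \<in> S" using assms(1) S_a by (simp add: Suc_ile_eq)
  then show "infdist z S \<le> z - a (Suc j)" using infdist_le[of "a (Suc j)" S z] assms by (simp add: dist_real_def)
qed

lemma infdist_pos: "z \<notin> S \<Longrightarrow> infdist z S > 0"
  using S_closed S_0 in_closed_iff_infdist_zero[of S z] infdist_nonneg[of z S] by force

end

context pe begin

lemma a_anti: "enat j \<le> N \<Longrightarrow> i < j \<Longrightarrow> a j < a i"
proof (induction j)
  case 0 then show ?case by simp
next
  case (Suc j)
  have "a (Suc j) < a j" using sp Suc.prems by (simp add: sing_points_ok_def)
  moreover have "enat j \<le> N" using Suc.prems(1) by (meson Suc_ile_eq order_less_imp_le)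
  ultimately show ?case using Suc by (cases "i = j") auto
qed

lemma a_nonneg: "enat i \<le> N \<Longrightarrow> a i \<ge> 0"
proof (cases N)
  case (enat n)
  assume i: "enat i \<le> N"
  have an: "a n = 0" using sp enat by (simp add: sing_points_ok_def)
  show ?thesis
  proof (cases "i = n")
    case True then show ?thesis using an by simp
  next
    case False then have "i < n" using i enat by simp
    then show ?thesis using a_anti[of n i] an enat by simp
  qed
next
  case infinity
  then have lim: "a \<longlonglongrightarrow> 0" using sp by (simp add: sing_points_ok_def)
  show ?thesis
  proof (rule ccontr)
    assume "\<not> a i \<ge> 0"
    then have "a i < 0" by simp
    then have "eventually (\<lambda>j. a i < a j) sequentially" using lim by (simp add: order_tendstoD(1))
    then obtain j where "j > i" "a i < a j"
      by (metis eventually_sequentially le_add2 less_add_Suc1 order.strict_trans2 add.commute)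
    moreover have "a j < a i" using a_anti[of j i] infinity \<open>j > i\<close> by simp
    ultimately show False by simp
  qed
qed

lemma a_le1: "enat j \<le> N \<Longrightarrow> a j \<le> 1"
  using a_anti[of j 0] a0 by (cases j) auto

lemma branch_disj:
  assumes j: "enat j < N" and x: "x \<in> branch a j"
  shows "x \<notin> S" "x \<in> {0..1}"
proof -
  have x1: "a (Suc j) < x" "x < a j" using x by (auto simp: branch_def)
  have jN: "enat (Suc j) \<le> N" using j by (simp add: Suc_ile_eq)
  have jN': "enat j \<le> N" using j by simp
  have "a (Suc j) \<ge> 0" using a_nonneg jN by blast
  moreover have "a j \<le> 1" using a_le1 jN' by blast
  ultimately show "x \<in> {0..1}" using x1 by auto
  show "x \<notin> S"
  proof
    assume "x \<in> S"
    then consider "x = 0" | i where "enat i \<le> N" "x = a i" by (auto simp: sing_set_def)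
    then show False
    proof cases
      case 1 then show False using x1 \<open>a (Suc j) \<ge> 0\<close> by simp
    next
      case (2 i)
      show False
      proof (cases "i \<le> j")
        case True
        then have "a j \<le> a i" using a_anti[OF jN', of i] by (cases "i = j") auto
        then show False using 2 x1 by simp
      next
        case False
        then have "a i \<le> a (Suc j)" using a_anti[OF 2(1), of "Suc j"] by (cases "i = Suc j") auto
        then show False using 2 x1 by simp
      qed
    qed
  qed
qed

lemma T_deriv:
  assumes "enat j < N" "x \<in> branch a j"
  shows "(T has_real_derivative deriv T x) (at x)"
    and "(deriv T has_real_derivative deriv (deriv T) x) (at x)"
proof -
  have c: "\<forall>x\<in>branch a j. \<forall>k<3. ((deriv ^^ k) T has_real_derivative (deriv ^^ Suc k) T x) (at x)"
    using C3[OF assms(1)] by (simp add: C3_on_def)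
  have ck: "\<And>k. k < 3 \<Longrightarrow> ((deriv ^^ k) T has_real_derivative (deriv ^^ Suc k) T x) (at x)"
    using c assms(2) by blast
  have "((deriv ^^ 0) T has_real_derivative (deriv ^^ Suc 0) T x) (at x)" using ck[of 0] by simp
  then show "(T has_real_derivative deriv T x) (at x)" by simp
  have "((deriv ^^ 1) T has_real_derivative (deriv ^^ Suc 1) T x) (at x)" using ck[of 1] by simp
  then show "(deriv T has_real_derivative deriv (deriv T) x) (at x)" by simp
qed

lemma T_deriv_ge:
  assumes "x \<in> {0..1}" "x \<notin> S"
  shows "\<bar>deriv T x\<bar> \<ge> C0 * lam"
  using expand[of 1 x] assms by simp

lemma T_deriv_pos: "x \<in> {0..1} \<Longrightarrow> x \<notin> S \<Longrightarrow> deriv T x \<noteq> 0"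
  using T_deriv_ge[of x] C0 lam by (smt (verit) mult_pos_pos)

definition "Kd = 2 * (exp C1 - 1) / C1"

lemma Kd_pos: "Kd > 0"
  using C1 by (simp add: Kd_def)

end

context pe begin

lemma deriv_bound:
  assumes z: "z \<in> {0..1}" "z \<notin> S"
  shows "\<bar>deriv T z\<bar> \<le> Kd / infdist z S"
proof -
  obtain j where j: "enat j < N" "a (Suc j) < z" "z < a j" using branch_exists[OF z] by blast
  define L where "L = a j - z"
  define u0 where "u0 = L / 2"
  have L0: "L > 0" using j by (simp add: L_def)
  have u0: "u0 > 0" using L0 by (simp add: u0_def)
  have inb: "t \<in> branch a j" if "z \<le> t" "t \<le> z + u0" for t
  proof -
    have "t < a j" using that j unfolding u0_def L_def by (simp add: field_simps)
    then show ?thesis using that j by (auto simp: branch_def)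
  qed
  have tI: "t \<in> {0..1}" "t \<notin> S" if "z \<le> t" "t \<le> z + u0" for t
    using branch_disj[OF j(1) inb[OF that]] by auto
  have dT: "(T has_real_derivative deriv T t) (at t)"
    and dT2: "(deriv T has_real_derivative deriv (deriv T) t) (at t)"
    and nz: "deriv T t \<noteq> 0"
    and p1: "\<bar>deriv (deriv T) t\<bar> / \<bar>deriv T t\<bar>^2 < C1"
    if "z \<le> t" "t \<le> z + u0" for t
    using T_deriv[OF j(1) inb[OF that]] T_deriv_pos[OF tI[OF that]] pe1[OF j(1) inb[OF that]] by auto
  define p where "p = \<bar>deriv T z\<bar>"
  have p0: "p > 0" using nz[of z] u0 by (simp add: p_def)
  define h where "h t = inverse (deriv T t)" for t
  have dh: "(h has_real_derivative (- (deriv (deriv T) t * inverse (deriv T t ^ Suc (Suc 0))))) (at t)"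
    if "z \<le> t" "t \<le> z + u0" for t
    unfolding h_def by (rule DERIV_inverse_fun[OF dT2[OF that] nz[OF that]])
  have dhb: "\<bar>- (deriv (deriv T) t * inverse (deriv T t ^ Suc (Suc 0)))\<bar> \<le> C1"
    if "z \<le> t" "t \<le> z + u0" for t
  proof -
    have "\<bar>- (deriv (deriv T) t * inverse (deriv T t ^ Suc (Suc 0)))\<bar>
          = \<bar>deriv (deriv T) t\<bar> / \<bar>deriv T t\<bar>^2"
      by (simp add: abs_mult divide_inverse power2_abs) (metis abs_mult_self_eq inverse_mult_distrib power2_eq_square)
    then show ?thesis using p1[OF that] by simp
  qed
  have step1: "\<bar>h t\<bar> \<le> 1 / p + C1 * (t - z)" if "z \<le> t" "t \<le> z + u0" for t
  proof (cases "t = z")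
    case True then show ?thesis by (simp add: h_def p_def abs_inverse divide_inverse)
  next
    case False
    then have "z < t" using that by simp
    have "\<exists>\<xi>. z < \<xi> \<and> \<xi> < t \<and> h t - h z = (t - z) * (- (deriv (deriv T) \<xi> * inverse (deriv T \<xi> ^ Suc (Suc 0))))"
    proof (rule MVT2[OF \<open>z < t\<close>])
      fix x assume "z \<le> x" "x \<le> t"
      then show "(h has_real_derivative - (deriv (deriv T) x * inverse (deriv T x ^ Suc (Suc 0)))) (at x)"
        using that by (intro dh) auto
    qed
    then obtain \<xi> where xi: "z < \<xi>" "\<xi> < t"
      "h t - h z = (t - z) * (- (deriv (deriv T) \<xi> * inverse (deriv T \<xi> ^ Suc (Suc 0))))"
      by blast
    have "\<bar>h t - h z\<bar> \<le> (t - z) * C1"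
      using xi dhb[of \<xi>] that \<open>z < t\<close> by (simp add: abs_mult mult_left_mono)
    moreover have "\<bar>h z\<bar> = 1 / p" by (simp add: h_def p_def abs_inverse divide_inverse)
    ultimately show ?thesis by (simp add: algebra_simps)
  qed
  have lowT: "\<bar>deriv T t\<bar> \<ge> p / (1 + C1 * (t - z) * p)" if "z \<le> t" "t \<le> z + u0" for t
  proof -
    have hpos: "\<bar>h t\<bar> > 0" using nz[OF that] by (simp add: h_def)
    have "\<bar>deriv T t\<bar> = 1 / \<bar>h t\<bar>" by (simp add: h_def abs_inverse divide_inverse)
    also have "\<dots> \<ge> 1 / (1 / p + C1 * (t - z))"
      using step1[OF that] hpos by (intro divide_left_mono) auto
    also have "1 / (1 / p + C1 * (t - z)) = p / (1 + C1 * (t - z) * p)"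
      using p0 by (simp add: field_simps)
    finally show ?thesis .
  qed
  have sign: "\<exists>\<sigma>. \<bar>\<sigma>\<bar> = 1 \<and> (\<forall>t. z \<le> t \<and> t \<le> z + u0 \<longrightarrow> \<sigma> * deriv T t = \<bar>deriv T t\<bar>)"
  proof -
    have cont: "isCont (deriv T) t" if "z \<le> t" "t \<le> z + u0" for t
      using dT2[OF that] by (rule DERIV_isCont)
    show ?thesis
    proof (cases "deriv T z > 0")
      case True
      have "deriv T t > 0" if t: "z \<le> t" "t \<le> z + u0" for t
      proof (rule ccontr)
        assume "\<not> deriv T t > 0"
        then have "deriv T t \<le> 0" by simp
        from IVT2[of "deriv T" t 0 z, OF this] True t cont
        obtain x where "z \<le> x" "x \<le> t" "deriv T x = 0" by force
        then show False using nz[of x] t by simp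
      qed
      then show ?thesis by (intro exI[of _ 1]) (auto simp: less_imp_le)
    next
      case False
      then have F: "deriv T z < 0" using nz[of z] u0 by force
      have "deriv T t < 0" if t: "z \<le> t" "t \<le> z + u0" for t
      proof (rule ccontr)
        assume "\<not> deriv T t < 0"
        then have "deriv T t \<ge> 0" by simp
        from IVT[of "deriv T" z 0 t, OF _ this] F t cont
        obtain x where "z \<le> x" "x \<le> t" "deriv T x = 0" by force
        then show False using nz[of x] t by simp
      qed
      then show ?thesis by (intro exI[of _ "-1"]) (auto simp: abs_if)
    qed
  qed
  then obtain \<sigma> where sg: "\<bar>\<sigma>\<bar> = 1" "\<And>t. z \<le> t \<Longrightarrow> t \<le> z + u0 \<Longrightarrow> \<sigma> * deriv T t = \<bar>deriv T t\<bar>"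
    by blast
  define \<phi> where "\<phi> t = \<sigma> * (T t - T z) - ln (1 + C1 * (t - z) * p) / C1" for t
  have mono: "\<phi> z \<le> \<phi> (z + u0)"
  proof (rule DERIV_nonneg_imp_nondecreasing[of z "z + u0" \<phi>])
    show "z \<le> z + u0" using u0 by simp
    fix t assume t: "z \<le> t" "t \<le> z + u0"
    have pos: "1 + C1 * (t - z) * p > 0" using t C1 p0 by (simp add: add_pos_nonneg)
    have "(\<phi> has_real_derivative (\<sigma> * deriv T t - (C1 * p) / (1 + C1 * (t - z) * p) / C1)) (at t)"
      unfolding \<phi>_def using pos
      by (auto intro!: derivative_eq_intros dT[OF t])
    moreover have "\<sigma> * deriv T t - (C1 * p) / (1 + C1 * (t - z) * p) / C1 \<ge> 0"
      using lowT[OF t] sg(2)[OF t] C1 by simp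
    ultimately show "\<exists>y. (\<phi> has_real_derivative y) (at t) \<and> y \<ge> 0" by blast
  qed
  have "\<sigma> * (T (z + u0) - T z) \<le> 1"
  proof -
    have "T (z + u0) \<in> {0..1}" "T z \<in> {0..1}" using TI tI[of "z + u0"] tI[of z] u0 by auto
    then have "\<bar>T (z + u0) - T z\<bar> \<le> 1" by auto
    then show ?thesis using sg(1) by (metis abs_ge_self abs_mult mult_1 order.trans)
  qed
  then have "ln (1 + C1 * u0 * p) / C1 \<le> 1" using mono by (simp add: \<phi>_def)
  then have "ln (1 + C1 * u0 * p) \<le> C1" using C1 by (simp add: divide_le_eq)
  then have "1 + C1 * u0 * p \<le> exp C1"
    using C1 u0 p0 by (metis add_pos_pos exp_ln less_numeral_extra(1) mult_pos_pos exp_le_cancel_iff)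
  then have "p \<le> (exp C1 - 1) / (C1 * u0)" using C1 u0 by (simp add: field_simps)
  also have "\<dots> = Kd / L" by (simp add: Kd_def u0_def field_simps)
  also have "\<dots> \<le> Kd / infdist z S"
    using branch_dist[OF j] infdist_pos[OF z(2)] Kd_pos L_def by (intro divide_left_mono) auto
  finally show ?thesis by (simp add: p_def)
qed

end

context pe begin

lemma deriv_at: "z \<in> {0..1} \<Longrightarrow> z \<notin> S \<Longrightarrow> (T has_real_derivative deriv T z) (at z)"
  using branch_exists[of z] T_deriv(1) by (auto simp: branch_def)

lemma infdist_near: "infdist w S \<ge> infdist z S - \<bar>w - z\<bar>"
  using infdist_triangle[of z S w] by (simp add: dist_real_def abs_minus_commute)

lemma near_notS: "\<bar>w - z\<bar> < infdist z S \<Longrightarrow> w \<notin> S"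
  using infdist_near[of z w] in_closed_iff_infdist_zero[OF S_closed] S_0 by force

lemma lip_step:
  assumes z: "z \<in> {0..1}" "z \<notin> S"
    and uv: "u \<in> {0..1}" "v \<in> {0..1}" "\<bar>u - z\<bar> < infdist z S / 2" "\<bar>v - z\<bar> < infdist z S / 2"
  shows "\<bar>T u - T v\<bar> \<le> (2 * Kd / infdist z S) * \<bar>u - v\<bar>"
proof -
  define \<delta> where "\<delta> = infdist z S"
  have d0: "\<delta> > 0" using infdist_pos[OF z(2)] by (simp add: \<delta>_def)
  have main: "\<bar>T v' - T u'\<bar> \<le> (2 * Kd / \<delta>) * (v' - u')"
    if "u' < v'" "u' \<in> {0..1}" "v' \<in> {0..1}" "\<bar>u' - z\<bar> < \<delta> / 2" "\<bar>v' - z\<bar> < \<delta> / 2" for u' v'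
  proof -
    have wp: "w \<in> {0..1}" "w \<notin> S" "infdist w S \<ge> \<delta> / 2" if "u' \<le> w" "w \<le> v'" for w
    proof -
      show "w \<in> {0..1}" using that \<open>u' \<in> {0..1}\<close> \<open>v' \<in> {0..1}\<close> by auto
      have "\<bar>w - z\<bar> < \<delta> / 2" using that \<open>\<bar>u' - z\<bar> < \<delta> / 2\<close> \<open>\<bar>v' - z\<bar> < \<delta> / 2\<close>
        by arith
      then show "infdist w S \<ge> \<delta> / 2" using infdist_near[of z w] by (simp add: \<delta>_def)
      then show "w \<notin> S" using d0 in_closed_iff_infdist_zero[OF S_closed] S_0 by force
    qed
    have "\<exists>\<xi>. u' < \<xi> \<and> \<xi> < v' \<and> T v' - T u' = (v' - u') * deriv T \<xi>"
    proof (rule MVT2[OF \<open>u' < v'\<close>])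
      fix w assume "u' \<le> w" "w \<le> v'"
      then show "(T has_real_derivative deriv T w) (at w)" using wp deriv_at by blast
    qed
    then obtain \<xi> where xi: "u' < \<xi>" "\<xi> < v'" "T v' - T u' = (v' - u') * deriv T \<xi>" by blast
    have "\<bar>deriv T \<xi>\<bar> \<le> Kd / infdist \<xi> S" using deriv_bound wp xi by auto
    also have "\<dots> \<le> Kd / (\<delta> / 2)" using wp[of \<xi>] xi d0 Kd_pos by (intro divide_left_mono) auto
    finally have "\<bar>deriv T \<xi>\<bar> \<le> 2 * Kd / \<delta>" by (simp add: mult.commute)
    have "\<bar>T v' - T u'\<bar> = (v' - u') * \<bar>deriv T \<xi>\<bar>" using xi that by (simp add: abs_mult)
    also have "\<dots> \<le> (v' - u') * (2 * Kd / \<delta>)"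
      using \<open>\<bar>deriv T \<xi>\<bar> \<le> 2 * Kd / \<delta>\<close> that by (intro mult_left_mono) auto
    finally show ?thesis by (simp add: mult.commute)
  qed
  show ?thesis
  proof (cases u v rule: linorder_cases)
    case less then show ?thesis using main[of u v] uv by (simp add: \<delta>_def abs_minus_commute)
  next
    case equal then show ?thesis by simp
  next
    case greater then show ?thesis using main[of v u] uv by (simp add: \<delta>_def abs_minus_commute)
  qed
qed

lemma orbit_I: "w \<in> {0..1} \<Longrightarrow> (T ^^ n) w \<in> {0..1}"
proof (induction n)
  case 0 then show ?case by simp
next
  case (Suc n) then show ?case using TI[of "(T ^^ n) w"] by simp
qed

lemma funpow_deriv:
  assumes "\<forall>i<n. (T ^^ i) w \<in> {0..1} - S"
  shows "\<exists>D. ((T ^^ n) has_real_derivative D) (at w)"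
  using assms
proof (induction n)
  case 0
  show ?case by (rule exI[of _ 1]) (simp add: id_def DERIV_ident)
next
  case (Suc n)
  then obtain D where D: "((T ^^ n) has_real_derivative D) (at w)" by auto
  have "(T ^^ n) w \<in> {0..1} - S" using Suc.prems by auto
  then have "(T has_real_derivative deriv T ((T ^^ n) w)) (at ((T ^^ n) w))" using deriv_at by auto
  from DERIV_chain[OF this D] show ?case by (metis funpow.simps(2))
qed

lemma funpow_deriv_ge:
  assumes "\<forall>i<n. (T ^^ i) w \<in> {0..1} - S"
  obtains D where "((T ^^ n) has_real_derivative D) (at w)" "\<bar>D\<bar> \<ge> C0 * lam ^ n"
proof -
  obtain D where D: "((T ^^ n) has_real_derivative D) (at w)" using funpow_deriv[OF assms] by blast
  then have "deriv (T ^^ n) w = D" by (rule DERIV_imp_deriv)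
  then have "\<bar>D\<bar> \<ge> C0 * lam ^ n" using expand[OF assms] by simp
  then show ?thesis using D that by blast
qed

definition "dd x l = infdist ((T ^^ l) x) S"

lemma propagate:
  assumes x: "x \<in> {0..1}" and orb: "\<forall>l<k. (T ^^ l) x \<notin> S" and r: "r \<ge> 0"
    and small: "\<forall>l<k. r * (\<Prod>i<l. 2 * Kd / dd x i) < dd x l / 2"
    and w: "w \<in> {0..1}" "\<bar>w - x\<bar> \<le> r"
  shows "l \<le> k \<Longrightarrow> \<bar>(T ^^ l) w - (T ^^ l) x\<bar> \<le> r * (\<Prod>i<l. 2 * Kd / dd x i)"
proof (induction l)
  case 0 then show ?case using w by simp
next
  case (Suc l)
  then have lk: "l < k" by simp
  have IH: "\<bar>(T ^^ l) w - (T ^^ l) x\<bar> \<le> r * (\<Prod>i<l. 2 * Kd / dd x i)" using Suc lk by simp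
  have z: "(T ^^ l) x \<in> {0..1}" "(T ^^ l) x \<notin> S" using orbit_I x orb lk by auto
  have "\<bar>(T ^^ l) w - (T ^^ l) x\<bar> < infdist ((T ^^ l) x) S / 2"
    using IH small lk by (auto simp: dd_def)
  moreover have "infdist ((T ^^ l) x) S > 0" using infdist_pos z by auto
  ultimately have "\<bar>T ((T ^^ l) w) - T ((T ^^ l) x)\<bar>
      \<le> (2 * Kd / infdist ((T ^^ l) x) S) * \<bar>(T ^^ l) w - (T ^^ l) x\<bar>"
    using lip_step[OF z orbit_I[OF w(1)] orbit_I[OF x]] by simp
  also have "\<dots> \<le> (2 * Kd / infdist ((T ^^ l) x) S) * (r * (\<Prod>i<l. 2 * Kd / dd x i))"
    using IH Kd_pos \<open>infdist ((T ^^ l) x) S > 0\<close> by (intro mult_left_mono) auto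
  also have "\<dots> = r * (\<Prod>i<Suc l. 2 * Kd / dd x i)" by (simp add: algebra_simps dd_def)
  finally show ?case by simp
qed

end

context pe begin

definition "ff z = max 0 (- ln (infdist z S))"
definition "Sf m x = (\<Sum>i<m. ff ((T ^^ i) x))"
definition "K2 = max (2 * Kd) 1"
definition "BB M = ln K2 + M"
definition "AA M = BB M + M"

lemma ff_nonneg: "ff z \<ge> 0" by (simp add: ff_def)

lemma K2: "K2 \<ge> 1" "2 * Kd \<le> K2" by (auto simp: K2_def)

lemma dd_pos: "x \<in> {0..1} \<Longrightarrow> (T ^^ i) x \<notin> S \<Longrightarrow> dd x i > 0"
  by (simp add: dd_def infdist_pos)

lemma inv_dd: assumes "(T ^^ i) x \<notin> S" shows "1 / dd x i \<le> exp (ff ((T ^^ i) x))"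
proof -
  have p: "dd x i > 0" using assms by (simp add: dd_def infdist_pos)
  have "1 / dd x i = exp (- ln (dd x i))" using p by (simp add: exp_minus inverse_eq_divide)
  also have "\<dots> \<le> exp (ff ((T ^^ i) x))" by (simp add: ff_def dd_def)
  finally show ?thesis .
qed

lemma dd_lower:
  fixes M :: real
  assumes "(T ^^ i) x \<notin> S" "Sf (Suc i) x \<le> M * real (Suc i)"
  shows "dd x i \<ge> exp (- (M * real (Suc i)))"
proof -
  have p: "dd x i > 0" using assms by (simp add: dd_def infdist_pos)
  have "ff ((T ^^ i) x) \<le> Sf (Suc i) x"
    unfolding Sf_def by (rule member_le_sum) (auto simp: ff_nonneg)
  then have "- ln (dd x i) \<le> M * real (Suc i)" using assms(2) by (simp add: ff_def dd_def)
  then have "exp (- (M * real (Suc i))) \<le> exp (ln (dd x i))" by simp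
  then show ?thesis using p by simp
qed

lemma prod_bound:
  fixes M :: real
  assumes "\<forall>i<l. (T ^^ i) x \<notin> S" "Sf l x \<le> M * real l"
  shows "(\<Prod>i<l. 2 * Kd / dd x i) \<le> exp (BB M * real l)"
proof -
  have "(\<Prod>i<l. 2 * Kd / dd x i) \<le> (\<Prod>i<l. K2 * exp (ff ((T ^^ i) x)))"
  proof (rule prod_mono)
    fix i assume "i \<in> {..<l}"
    then have n: "(T ^^ i) x \<notin> S" using assms by auto
    have p: "dd x i > 0" using n by (simp add: dd_def infdist_pos)
    have "2 * Kd / dd x i = (2 * Kd) * (1 / dd x i)" by simp
    also have "\<dots> \<le> K2 * exp (ff ((T ^^ i) x))"
      using K2 inv_dd[OF n] Kd_pos p by (intro mult_mono) auto
    finally show "0 \<le> 2 * Kd / dd x i \<and> 2 * Kd / dd x i \<le> K2 * exp (ff ((T ^^ i) x))"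
      using Kd_pos p by simp
  qed
  also have "\<dots> = K2 ^ l * exp (Sf l x)"
    by (simp add: prod.distrib Sf_def exp_sum)
  also have "\<dots> \<le> K2 ^ l * exp (M * l)"
    using assms(2) K2 by (intro mult_left_mono) auto
  also have "\<dots> = exp (BB M * l)"
  proof -
    have "K2 ^ l = exp (ln K2 * l)" using K2 by (simp add: exp_of_nat_mult mult.commute)
    then show ?thesis by (simp add: BB_def exp_add[symmetric] algebra_simps)
  qed
  finally show ?thesis .
qed

lemma good_G:
  fixes M r :: real
  assumes x: "x \<in> {0..1}" and orb: "\<forall>l. (T ^^ l) x \<notin> S" and M: "M \<ge> 0"
    and W: "\<forall>m. Sf m x \<le> M * real m" and r: "r \<ge> 0" "r * exp (AA M * real k) < 1 / 2"
    and w: "w \<in> {0..1}" "\<bar>w - x\<bar> \<le> r"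
  shows "\<bar>(T ^^ k) w - (T ^^ k) x\<bar> \<le> r * exp (BB M * real k)"
    and "\<forall>l<k. (T ^^ l) w \<in> {0..1} - S"
proof -
  have BB0: "BB M \<ge> 0" using K2 M by (simp add: BB_def)
  have small: "\<forall>l<k. r * (\<Prod>i<l. 2 * Kd / dd x i) < dd x l / 2"
  proof (intro allI impI)
    fix l assume lk: "l < k"
    have "r * (\<Prod>i<l. 2 * Kd / dd x i) \<le> r * exp (BB M * l)"
      using prod_bound[of l x M] orb W r by (intro mult_left_mono) auto
    also have "\<dots> = r * exp (BB M * l + M * Suc l) * exp (- (M * Suc l))"
      by (simp add: exp_add[symmetric])
    also have "\<dots> \<le> r * exp (AA M * k) * exp (- (M * Suc l))"
    proof -
      have "BB M * l + M * Suc l \<le> AA M * k"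
      proof -
        have "BB M * l \<le> BB M * k" using BB0 lk by (intro mult_left_mono) auto
        moreover have "M * Suc l \<le> M * k" using M lk by (intro mult_left_mono) auto
        ultimately show ?thesis by (simp add: AA_def algebra_simps)
      qed
      then show ?thesis using r by (intro mult_right_mono mult_left_mono) auto
    qed
    also have "\<dots> < 1 / 2 * exp (- (M * Suc l))"
      using r by (intro mult_strict_right_mono) auto
    also have "\<dots> \<le> dd x l / 2"
      using dd_lower[of l x M] orb W[rule_format, of "Suc l"] by simp
    finally show "r * (\<Prod>i<l. 2 * Kd / dd x i) < dd x l / 2" .
  qed
  have orbk: "\<forall>l<k. (T ^^ l) x \<notin> S" using orb by auto
  have P: "\<bar>(T ^^ l) w - (T ^^ l) x\<bar> \<le> r * (\<Prod>i<l. 2 * Kd / dd x i)" if "l \<le> k" for l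
    using propagate[OF x orbk r(1) small w that] .
  show "\<bar>(T ^^ k) w - (T ^^ k) x\<bar> \<le> r * exp (BB M * real k)"
  proof -
    have "(\<Prod>i<k. 2 * Kd / dd x i) \<le> exp (BB M * real k)" using prod_bound[of k x M] orb W by auto
    then have "r * (\<Prod>i<k. 2 * Kd / dd x i) \<le> r * exp (BB M * real k)" using r by (intro mult_left_mono) auto
    then show ?thesis using P[of k] by simp
  qed
  show "\<forall>l<k. (T ^^ l) w \<in> {0..1} - S"
  proof (intro allI impI)
    fix l assume lk: "l < k"
    have "\<bar>(T ^^ l) w - (T ^^ l) x\<bar> < dd x l / 2" using P[of l] small lk by force
    moreover have "dd x l > 0" using dd_pos x orb by auto
    ultimately have "\<bar>(T ^^ l) w - (T ^^ l) x\<bar> < infdist ((T ^^ l) x) S" by (simp add: dd_def)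
    then have "(T ^^ l) w \<notin> S" by (rule near_notS)
    then show "(T ^^ l) w \<in> {0..1} - S" using orbit_I[OF w(1)] by simp
  qed
qed

end

context pe begin

definition "W M = {x \<in> {0..1}. (\<forall>l. (T ^^ l) x \<notin> S) \<and> (\<forall>m. Sf m x \<le> M * real m)}"
definition "H M k r = {x \<in> W M. \<bar>(T ^^ k) x - x\<bar> < r}"
definition "hh M k = exp (- (AA M * real k)) / 4"

lemma AA_nonneg: "M \<ge> 0 \<Longrightarrow> AA M \<ge> 0"
  using K2 by (simp add: AA_def BB_def)

lemma hh_pos: "hh M k > 0" by (simp add: hh_def)

lemma hh_exp: "hh M k * exp (AA M * real k) = 1 / 4"
  by (simp add: hh_def exp_minus field_simps)

lemma H_diam_aux:
  assumes M: "M \<ge> 0" and k: "C0 * lam ^ k \<ge> 2"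
    and u: "u \<in> H M k r" and v: "v \<in> H M k r" and uv: "u < v" "v - u \<le> hh M k"
  shows "v - u < 2 * r"
proof -
  have uW: "u \<in> {0..1}" "\<forall>l. (T ^^ l) u \<notin> S" "\<forall>m. Sf m u \<le> M * real m"
    using u by (auto simp: H_def W_def)
  have vI: "v \<in> {0..1}" using v by (auto simp: H_def W_def)
  have gu: "\<bar>(T ^^ k) u - u\<bar> < r" and gv: "\<bar>(T ^^ k) v - v\<bar> < r" using u v by (auto simp: H_def)
  have wgood: "\<forall>l<k. (T ^^ l) w \<in> {0..1} - S" if "u \<le> w" "w \<le> v" for w
  proof -
    have wI: "w \<in> {0..1}" using that uW(1) vI by auto
    have "hh M k * exp (AA M * real k) < 1 / 2" using hh_exp[of M k] by simp
    moreover have "\<bar>w - u\<bar> \<le> hh M k" using that uv by auto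
    ultimately show ?thesis
      using good_G(2)[OF uW(1) uW(2) M uW(3) less_imp_le[OF hh_pos] _ wI] by blast
  qed
  have dg: "((\<lambda>w. (T ^^ k) w - w) has_real_derivative (deriv (T ^^ k) w - 1)) (at w)"
    and dgb: "\<bar>deriv (T ^^ k) w - 1\<bar> \<ge> 1"
    if wuv: "u \<le> w" "w \<le> v" for w
  proof -
    obtain D where D: "((T ^^ k) has_real_derivative D) (at w)" "\<bar>D\<bar> \<ge> C0 * lam ^ k"
      using funpow_deriv_ge[OF wgood[OF wuv]] by blast
    have Dd: "deriv (T ^^ k) w = D" using D(1) by (rule DERIV_imp_deriv)
    show "((\<lambda>w. (T ^^ k) w - w) has_real_derivative (deriv (T ^^ k) w - 1)) (at w)"
      unfolding Dd using D(1) by (auto intro!: derivative_eq_intros)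
    show "\<bar>deriv (T ^^ k) w - 1\<bar> \<ge> 1" using D(2) k Dd by auto
  qed
  have "\<exists>\<xi>. u < \<xi> \<and> \<xi> < v \<and> ((T ^^ k) v - v) - ((T ^^ k) u - u) = (v - u) * (deriv (T ^^ k) \<xi> - 1)"
    by (rule MVT2[OF uv(1)]) (rule dg; simp)
  then obtain \<xi> where xi: "u < \<xi>" "\<xi> < v"
    "((T ^^ k) v - v) - ((T ^^ k) u - u) = (v - u) * (deriv (T ^^ k) \<xi> - 1)" by blast
  have "v - u \<le> (v - u) * \<bar>deriv (T ^^ k) \<xi> - 1\<bar>"
    using dgb[of \<xi>] xi uv by (simp add: mult_le_cancel_left1 less_imp_le)
  also have "\<dots> = \<bar>((T ^^ k) v - v) - ((T ^^ k) u - u)\<bar>" using xi uv by (simp add: abs_mult)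
  also have "\<dots> < 2 * r" using gu gv by arith
  finally show ?thesis .
qed

lemma H_diam:
  assumes M: "M \<ge> 0" and k: "C0 * lam ^ k \<ge> 2"
    and u: "u \<in> H M k r" and v: "v \<in> H M k r" and uv: "\<bar>u - v\<bar> \<le> hh M k"
  shows "\<bar>u - v\<bar> < 2 * r"
proof (cases u v rule: linorder_cases)
  case less then show ?thesis using H_diam_aux[OF M k u v] uv by simp
next
  case equal
  then have "0 \<le> \<bar>(T ^^ k) u - u\<bar>" by simp
  then show ?thesis using u equal by (auto simp: H_def)
next
  case greater then show ?thesis using H_diam_aux[OF M k v u] uv by simp
qed

end
context pe begin

definition "cell M k j = {real j * hh M k .. (real j + 1) * hh M k}"
definition "ctr M k r j = (SOME u. u \<in> H M k r \<inter> cell M k j)"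
definition "piece M k r j = (if H M k r \<inter> cell M k j = {} then {} else {ctr M k r j - 2 * r .. ctr M k r j + 2 * r})"
definition "cover M k r = (\<Union>j\<in>{..nat \<lceil>1 / hh M k\<rceil>}. piece M k r j)"

lemma H_sub_cover:
  assumes M: "M \<ge> 0" and k: "C0 * lam ^ k \<ge> 2"
  shows "H M k r \<subseteq> cover M k r"
proof
  fix x assume x: "x \<in> H M k r"
  then have xI: "x \<in> {0..1}" by (auto simp: H_def W_def)
  define h where "h = hh M k"
  have h0: "h > 0" using hh_pos by (simp add: h_def)
  define j where "j = nat \<lfloor>x / h\<rfloor>"
  have fl0: "\<lfloor>x / h\<rfloor> \<ge> 0" using xI h0 by auto
  have jr: "real j = of_int \<lfloor>x / h\<rfloor>" using fl0 by (simp add: j_def)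
  have "real j \<le> x / h" "x / h < real j + 1" using jr by linarith+
  then have xc: "x \<in> cell M k j" using h0 by (auto simp: cell_def h_def[symmetric] field_simps)
  have "x / h \<le> 1 / h" using xI h0 by (simp add: divide_right_mono)
  then have "\<lfloor>x / h\<rfloor> \<le> \<lceil>1 / h\<rceil>" using floor_mono floor_le_ceiling order_trans by blast
  then have jJ: "j \<in> {..nat \<lceil>1 / hh M k\<rceil>}" by (simp add: j_def h_def nat_mono)
  have ne: "H M k r \<inter> cell M k j \<noteq> {}" using x xc by auto
  define c where "c = ctr M k r j"
  have c: "c \<in> H M k r \<inter> cell M k j" unfolding c_def ctr_def using ne by (metis ex_in_conv someI)
  have "\<bar>x - c\<bar> \<le> hh M k" using c xc by (auto simp: cell_def algebra_simps abs_le_iff)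
  then have "\<bar>x - c\<bar> < 2 * r" using H_diam[OF M k x] c by auto
  then have "x \<in> piece M k r j" using ne by (auto simp: piece_def c_def[symmetric] abs_less_iff)
  then show "x \<in> cover M k r" using jJ by (auto simp: cover_def)
qed

lemma piece_sets: "piece M k r j \<in> sets lborel"
  by (simp add: piece_def)

lemma cover_sets: "cover M k r \<in> sets lborel"
  unfolding cover_def by (intro sets.finite_UN) (auto simp: piece_def)

lemma cover_measure:
  assumes M: "M \<ge> 0" and r: "r \<ge> 0"
  shows "measure lborel (cover M k r) \<le> 24 * r * exp (AA M * real k)"
proof -
  define J where "J = nat \<lceil>1 / hh M k\<rceil>"
  have "measure lborel (cover M k r) \<le> (\<Sum>j\<in>{..J}. measure lborel (piece M k r j))"
    unfolding cover_def J_def by (rule measure_UNION_le) (auto simp: piece_def)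
  also have "\<dots> \<le> (\<Sum>j\<in>{..J}. 4 * r)"
  proof (rule sum_mono)
    fix j
    show "measure lborel (piece M k r j) \<le> 4 * r"
    proof (cases "H M k r \<inter> cell M k j = {}")
      case True then show ?thesis using r by (simp add: piece_def)
    next
      case False
      then have "piece M k r j = {ctr M k r j - 2 * r .. ctr M k r j + 2 * r}" by (simp add: piece_def)
      moreover have "ctr M k r j - 2 * r \<le> ctr M k r j + 2 * r" using r by simp
      ultimately show ?thesis by simp
    qed
  qed
  also have "\<dots> = (real J + 1) * (4 * r)" by simp
  also have "\<dots> \<le> (4 * exp (AA M * real k) + 2) * (4 * r)"
  proof -
    have c0: "\<lceil>1 / hh M k\<rceil> \<ge> 0" using hh_pos[of M k] by (smt (verit) ceiling_le_zero divide_pos_pos)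
    have "real J = of_int \<lceil>1 / hh M k\<rceil>" unfolding J_def using c0 by simp
    also have "\<dots> \<le> 1 / hh M k + 1" by (rule of_int_ceiling_le_add_one)
    finally have "real J \<le> 1 / hh M k + 1" .
    also have "1 / hh M k = 4 * exp (AA M * real k)" using hh_exp[of M k] hh_pos[of M k]
      by (simp add: field_simps)
    finally show ?thesis using r by (intro mult_right_mono) auto
  qed
  also have "\<dots> \<le> 24 * r * exp (AA M * real k)"
  proof -
    have "exp (AA M * real k) \<ge> 1" using AA_nonneg[OF M] by simp
    then have "4 * r * 2 \<le> 4 * r * (2 * exp (AA M * real k))" using r by (intro mult_left_mono) auto
    then show ?thesis by (simp add: algebra_simps)
  qed
  finally show ?thesis .
qed

end

context pe begin

lemma mu_facts: "prob_space \<mu>" "sets \<mu> = sets borel" "emeasure \<mu> {0..1} = 1"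
  "absolutely_continuous lborel \<mu>" "T \<in> measurable \<mu> \<mu>" "distr \<mu> \<mu> T = \<mu>"
  using acip by (auto simp: acip_ergodic_def)

lemma space_mu: "space \<mu> = UNIV"
  using sets_eq_imp_space_eq[OF mu_facts(2)] by simp

lemma meas_mu_iff: "f \<in> borel_measurable \<mu> \<longleftrightarrow> f \<in> borel_measurable borel"
  using measurable_cong_sets[OF mu_facts(2) refl] by blast

lemma T_borel: "T \<in> borel_measurable borel"
  using mu_facts(5) measurable_cong_sets[OF mu_facts(2) mu_facts(2)] by blast

lemma Tn_borel: "(T ^^ n) \<in> borel_measurable borel"
proof (induction n)
  case 0 then show ?case by (simp add: id_def)
next
  case (Suc n)
  then show ?case using measurable_comp[OF Suc T_borel] by (simp only: funpow.simps(2))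
qed

lemma Tn_mu: "(T ^^ n) \<in> measurable \<mu> \<mu>"
  using Tn_borel measurable_cong_sets[OF mu_facts(2) mu_facts(2)] by blast

lemma distr_Tn: "distr \<mu> \<mu> (T ^^ n) = \<mu>"
proof (induction n)
  case 0 then show ?case by (simp add: id_def)
next
  case (Suc n)
  have "distr \<mu> \<mu> (T ^^ Suc n) = distr \<mu> \<mu> (T \<circ> (T ^^ n))" by simp
  also have "\<dots> = distr (distr \<mu> \<mu> (T ^^ n)) \<mu> T"
    by (rule distr_distr[symmetric, OF mu_facts(5) Tn_mu])
  also have "\<dots> = \<mu>" using Suc mu_facts(6) by simp
  finally show ?case .
qed

lemma null_lborel_mu: "A \<in> null_sets lborel \<Longrightarrow> A \<in> null_sets \<mu>"
  using mu_facts(4) by (auto simp: absolutely_continuous_def)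

lemma AE_lborel_mu: assumes "AE x in lborel. P x" shows "AE x in \<mu>. P x"
proof -
  obtain A where A: "A \<in> null_sets lborel" "{x \<in> space lborel. \<not> P x} \<subseteq> A"
    using assms by (auto simp: eventually_ae_filter)
  have "A \<in> null_sets \<mu>" using A(1) by (rule null_lborel_mu)
  then show ?thesis using A(2) by (intro AE_I'[of A]) (auto simp: space_mu)
qed

lemma AE_I: "AE x in \<mu>. x \<in> {0..1}"
proof -
  interpret prob_space \<mu> by (rule mu_facts(1))
  have s: "{0..1::real} \<in> sets \<mu>" using mu_facts(2) by simp
  have "emeasure \<mu> (space \<mu> - {0..1}) = emeasure \<mu> (space \<mu>) - emeasure \<mu> {0..1}"
    by (rule emeasure_compl[OF s]) (simp add: mu_facts(3))
  also have "\<dots> = 0" using mu_facts(3) emeasure_space_1 by simp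
  finally have "UNIV - {0..1} \<in> null_sets \<mu>" using s by (auto simp: space_mu null_sets_def mu_facts(2))
  then show ?thesis by (intro AE_I'[of "UNIV - {0..1}"]) (auto simp: space_mu)
qed

lemma AE_orbit: "AE x in \<mu>. \<forall>l. (T ^^ l) x \<notin> S"
proof -
  have SN: "S \<in> null_sets \<mu>" using countable_imp_null_set_lborel[OF S_countable] null_lborel_mu by blast
  have "AE x in \<mu>. (T ^^ l) x \<notin> S" for l
  proof -
    have Ss: "S \<in> sets \<mu>" using SN by auto
    have "emeasure \<mu> ((T ^^ l) -` S \<inter> space \<mu>) = emeasure (distr \<mu> \<mu> (T ^^ l)) S"
      by (rule emeasure_distr[symmetric, OF Tn_mu Ss])
    also have "\<dots> = 0" using distr_Tn SN by (simp add: null_setsD1)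
    finally have "(T ^^ l) -` S \<in> null_sets \<mu>"
      using measurable_sets[OF Tn_mu Ss] by (auto simp: space_mu null_sets_def)
    then show ?thesis by (intro AE_I'[of "(T ^^ l) -` S"]) (auto simp: space_mu)
  qed
  then show ?thesis by (simp add: AE_all_countable)
qed

end

context pe begin

lemma infdist_borel: "(\<lambda>z. infdist z S) \<in> borel_measurable borel"
  by (intro borel_measurable_continuous_onI continuous_on_infdist continuous_on_id)

lemma ff_borel: "ff \<in> borel_measurable borel"
proof -
  have "(\<lambda>z. max 0 (- ln (infdist z S))) \<in> borel_measurable borel"
    using infdist_borel by measurable
  then show ?thesis by (simp add: ff_def[abs_def])
qed

lemma ff_level: "{x. ff x > real n} \<subseteq> {x. infdist x S < exp (- real n)}"
proof
  fix x assume "x \<in> {x. ff x > real n}"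
  then have f: "ff x > real n" by simp
  then have "- ln (infdist x S) > real n" by (simp add: ff_def)
  moreover have "infdist x S \<noteq> 0"
  proof
    assume "infdist x S = 0" then show False using f by (simp add: ff_def)
  qed
  then have "infdist x S > 0" using infdist_nonneg[of x S] by simp
  ultimately have "ln (infdist x S) < - real n" by linarith
  then have "exp (ln (infdist x S)) < exp (- real n)" by (rule exp_less_mono)
  then show "x \<in> {x. infdist x S < exp (- real n)}" using \<open>infdist x S > 0\<close> by simp
qed

lemma ff_level_measure: "measure \<mu> {x. ff x > real n} \<le> Cp * exp (- gam * real n)"
proof -
  interpret prob_space \<mu> by (rule mu_facts(1))
  have s: "{x. infdist x S < exp (- real n)} \<in> sets \<mu>"
    using infdist_borel mu_facts(2) by (simp add: pred_def)
  have "measure \<mu> {x. ff x > real n} \<le> measure \<mu> {x. infdist x S < exp (- real n)}"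
    using ff_level s by (intro finite_measure_mono) auto
  also have "\<dots> < Cp * exp (- real n) powr gam" using pe4[of "exp (- real n)"] by simp
  also have "exp (- real n) powr gam = exp (- gam * real n)" by (simp add: powr_def)
  finally show ?thesis by simp
qed

lemma ff_pointwise: "ennreal (ff x) \<le> (\<Sum>n. indicator {x. ff x > real n} x)"
proof -
  define m where "m = nat \<lceil>ff x\<rceil>"
  have c0: "\<lceil>ff x\<rceil> \<ge> 0" using ff_nonneg[of x] by simp
  have "real m = of_int \<lceil>ff x\<rceil>" unfolding m_def using c0 by simp
  then have "ff x \<le> real m" by simp
  then have "ennreal (ff x) \<le> ennreal (real m)" by (rule ennreal_leI)
  also have "\<dots> = (\<Sum>n<m. indicator {x. ff x > real n} x)"
  proof -
    have "indicator {x. ff x > real n} x = (1::ennreal)" if "n < m" for n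
    proof -
      have "int n < \<lceil>ff x\<rceil>" using that unfolding m_def by linarith
      then have "real n < ff x" by (simp add: less_ceiling_iff)
      then show ?thesis by simp
    qed
    then show ?thesis by (simp add: ennreal_of_nat_eq_real_of_nat)
  qed
  also have "\<dots> \<le> (\<Sum>n. indicator {x. ff x > real n} x)"
    by (rule sum_le_suminf) auto
  finally show ?thesis .
qed

lemma ff_integrable: "integrable \<mu> ff"
proof -
  have geo: "summable (\<lambda>n. Cp * exp (- gam * real n))"
  proof -
    have "(\<lambda>n. Cp * exp (- gam * real n)) = (\<lambda>n. Cp * exp (- gam) ^ n)"
      by (simp add: exp_of_nat_mult[symmetric] mult.commute)
    moreover have "summable (\<lambda>n. exp (- gam) ^ n)" using gam by (intro summable_geometric) simp
    ultimately show ?thesis by (simp add: summable_mult)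
  qed
  have meas: "(\<lambda>x. indicator {x. ff x > real n} x :: ennreal) \<in> borel_measurable \<mu>" for n
  proof -
    have "(\<lambda>x. indicator {x. ff x > real n} x :: ennreal) \<in> borel_measurable borel"
      using ff_borel by measurable
    then show ?thesis using measurable_cong_sets[OF mu_facts(2) refl] by blast
  qed
  have "(\<integral>\<^sup>+x. ennreal (norm (ff x)) \<partial>\<mu>) = (\<integral>\<^sup>+x. ennreal (ff x) \<partial>\<mu>)"
    using ff_nonneg by simp
  also have "\<dots> \<le> (\<integral>\<^sup>+x. (\<Sum>n. indicator {x. ff x > real n} x) \<partial>\<mu>)"
    by (rule nn_integral_mono) (rule ff_pointwise)
  also have "\<dots> = (\<Sum>n. \<integral>\<^sup>+x. indicator {x. ff x > real n} x \<partial>\<mu>)"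
    by (rule nn_integral_suminf) (rule meas)
  also have "\<dots> = (\<Sum>n. emeasure \<mu> {x. ff x > real n})"
  proof -
    have "{x. ff x > real n} \<in> sets \<mu>" for n using ff_borel mu_facts(2) by (simp add: pred_def)
    then show ?thesis by simp
  qed
  also have "\<dots> \<le> (\<Sum>n. ennreal (Cp * exp (- gam * real n)))"
  proof (rule suminf_le)
    fix n
    interpret prob_space \<mu> by (rule mu_facts(1))
    have "emeasure \<mu> {x. ff x > real n} = ennreal (measure \<mu> {x. ff x > real n})"
      by (simp add: emeasure_eq_measure)
    also have "\<dots> \<le> ennreal (Cp * exp (- gam * real n))"
      using ff_level_measure by (rule ennreal_leI)
    finally show "emeasure \<mu> {x. ff x > real n} \<le> ennreal (Cp * exp (- gam * real n))" .
  qed auto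
  also have "\<dots> = ennreal (\<Sum>n. Cp * exp (- gam * real n))"
    using geo Cp by (intro suminf_ennreal2) auto
  also have "\<dots> < \<infinity>" by simp
  finally have "(\<integral>\<^sup>+x. ennreal (norm (ff x)) \<partial>\<mu>) < \<infinity>" .
  moreover have "ff \<in> borel_measurable \<mu>" using ff_borel meas_mu_iff by blast
  ultimately show ?thesis by (intro integrableI_bounded) auto
qed

end

context pe begin

primrec FF :: "(real \<Rightarrow> real) \<Rightarrow> nat \<Rightarrow> real \<Rightarrow> real" where
  "FF g 0 x = 0"
| "FF g (Suc Q) x = max 0 (g x + FF g Q (T x))"

definition "Sg g m x = (\<Sum>i<m. g ((T ^^ i) x))"

lemma FF_nonneg: "FF g Q x \<ge> 0"
  by (cases Q) auto

lemma FF_mono: "FF g Q x \<le> FF g (Suc Q) x"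
proof (induction Q arbitrary: x)
  case 0 then show ?case by simp
next
  case (Suc Q)
  have "FF g Q (T x) \<le> FF g (Suc Q) (T x)" by (rule Suc)
  then show ?case by simp
qed

lemma Sg_Suc: "Sg g (Suc m) x = g x + Sg g m (T x)"
  unfolding Sg_def by (subst sum.lessThan_Suc_shift) (simp add: funpow_Suc_right del: funpow.simps)

lemma Sg_le: "m \<le> Q \<Longrightarrow> Sg g m x \<le> FF g Q x"
proof (induction Q arbitrary: m x)
  case 0 then show ?case by (simp add: Sg_def)
next
  case (Suc Q)
  show ?case
  proof (cases m)
    case 0 then show ?thesis using FF_nonneg by (simp add: Sg_def)
  next
    case (Suc m')
    then have "Sg g m' (T x) \<le> FF g Q (T x)" using Suc.IH Suc.prems by simp
    then show ?thesis using Suc by (simp add: Sg_Suc)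
  qed
qed

lemma FF_bound: "FF g Q x \<le> (\<Sum>i<Q. \<bar>g ((T ^^ i) x)\<bar>)"
proof (induction Q arbitrary: x)
  case 0 then show ?case by simp
next
  case (Suc Q)
  have "FF g (Suc Q) x \<le> \<bar>g x\<bar> + FF g Q (T x)" using FF_nonneg[of g Q "T x"] by auto
  also have "\<dots> \<le> \<bar>g x\<bar> + (\<Sum>i<Q. \<bar>g ((T ^^ i) (T x))\<bar>)" using Suc by simp
  also have "\<dots> = (\<Sum>i<Suc Q. \<bar>g ((T ^^ i) x)\<bar>)"
    by (subst sum.lessThan_Suc_shift) (simp add: funpow_Suc_right del: funpow.simps)
  finally show ?case .
qed

lemma T_mu_meas: "T \<in> measurable \<mu> \<mu>" by (rule mu_facts(5))

lemma FF_meas: assumes "g \<in> borel_measurable \<mu>" shows "FF g Q \<in> borel_measurable \<mu>"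
proof (induction Q)
  case 0 then show ?case by simp
next
  case (Suc Q)
  have "(\<lambda>x. FF g Q (T x)) \<in> borel_measurable \<mu>" using measurable_comp[OF T_mu_meas Suc] by (simp add: comp_def)
  then have "(\<lambda>x. max 0 (g x + FF g Q (T x))) \<in> borel_measurable \<mu>" using assms by measurable
  then show ?case by simp
qed

lemma integrable_iter:
  fixes g :: "real \<Rightarrow> real"
  assumes "integrable \<mu> g" shows "integrable \<mu> (\<lambda>x. g ((T ^^ i) x))"
proof -
  have gm: "g \<in> borel_measurable \<mu>" using assms by simp
  have "integrable (distr \<mu> \<mu> (T ^^ i)) g" using assms distr_Tn by simp
  then show ?thesis using integrable_distr_eq[where g="T ^^ i" and M=\<mu> and N=\<mu> and f=g] Tn_mu gm by simp
qed

lemma FF_integrable: assumes "integrable \<mu> g" shows "integrable \<mu> (FF g Q)"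
proof -
  have 1: "integrable \<mu> (\<lambda>x. \<Sum>i<Q. \<bar>g ((T ^^ i) x)\<bar>)"
  proof (rule Bochner_Integration.integrable_sum)
    fix i show "integrable \<mu> (\<lambda>x. \<bar>g ((T ^^ i) x)\<bar>)"
      using integrable_abs[OF integrable_iter[OF assms, of i]] by simp
  qed
  have 2: "FF g Q \<in> borel_measurable \<mu>" using FF_meas assms by simp
  have 3: "AE x in \<mu>. norm (FF g Q x) \<le> norm (\<Sum>i<Q. \<bar>g ((T ^^ i) x)\<bar>)"
    using FF_bound FF_nonneg by (auto intro!: AE_I2 simp: sum_nonneg)
  show ?thesis by (rule Bochner_Integration.integrable_bound[OF 1 2 3])
qed

lemma integral_T: fixes f :: "real \<Rightarrow> real" assumes "f \<in> borel_measurable \<mu>" shows "(\<integral>x. f (T x) \<partial>\<mu>) = (\<integral>x. f x \<partial>\<mu>)"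
  using integral_distr[where g=T and M=\<mu> and N=\<mu> and f=f] T_mu_meas assms mu_facts(6) by simp

lemma garsia:
  fixes g :: "real \<Rightarrow> real"
  assumes g: "integrable \<mu> g"
  shows "(\<integral>x. indicator {x. FF g (Suc Q) x > 0} x * g x \<partial>\<mu>) \<ge> 0"
proof -
  define G where "G = FF g (Suc Q)"
  define E where "E = {x. G x > 0}"
  have Gi: "integrable \<mu> G" unfolding G_def using FF_integrable[OF g] .
  have Gm: "G \<in> borel_measurable \<mu>" using Gi by simp
  have "{x \<in> space \<mu>. 0 < G x} \<in> sets \<mu>" using Gm by measurable
  then have Es: "E \<in> sets \<mu>" unfolding E_def by (simp add: space_mu)
  have GTi: "integrable \<mu> (\<lambda>x. G (T x))"
  proof -
    have "integrable (distr \<mu> \<mu> T) G" using Gi mu_facts(6) by simp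
    then show ?thesis using integrable_distr_eq[where g=T and M=\<mu> and N=\<mu> and f=G] T_mu_meas Gm by simp
  qed
  have pw: "G x - G (T x) \<le> indicator E x * g x" for x
  proof (cases "x \<in> E")
    case True
    then have "G x = g x + FF g Q (T x)" by (auto simp: E_def G_def)
    moreover have "FF g Q (T x) \<le> G (T x)" unfolding G_def by (rule FF_mono)
    ultimately show ?thesis using True by simp
  next
    case False
    then have "G x = 0" using FF_nonneg[of g "Suc Q" x] by (auto simp: E_def G_def)
    moreover have "G (T x) \<ge> 0" unfolding G_def by (rule FF_nonneg)
    ultimately show ?thesis using False by simp
  qed
  have "0 = (\<integral>x. G x \<partial>\<mu>) - (\<integral>x. G (T x) \<partial>\<mu>)" using integral_T[OF Gm] by simp
  also have "\<dots> = (\<integral>x. G x - G (T x) \<partial>\<mu>)" using Gi GTi by simp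
  also have "\<dots> \<le> (\<integral>x. indicator E x * g x \<partial>\<mu>)"
  proof (rule integral_mono)
    show "integrable \<mu> (\<lambda>x. G x - G (T x))" using Gi GTi by simp
    show "integrable \<mu> (\<lambda>x. indicator E x * g x)"
      using integrable_mult_indicator[OF Es g] by simp
  qed (rule pw)
  finally show ?thesis by (simp add: E_def G_def)
qed

end

context pe begin

definition "EE t Q = {x. FF (\<lambda>x. ff x - t) (Suc Q) x > 0}"

lemma Sg_ff: "Sg (\<lambda>x. ff x - t) m x = Sf m x - t * real m"
  by (simp add: Sg_def Sf_def sum_subtractf)

lemma EE_sets: "EE t Q \<in> sets \<mu>"
proof -
  interpret prob_space \<mu> by (rule mu_facts(1))
  have gi: "integrable \<mu> (\<lambda>x. ff x - t)" using ff_integrable by simp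
  have "FF (\<lambda>x. ff x - t) (Suc Q) \<in> borel_measurable \<mu>" using FF_meas gi by simp
  then have "{x \<in> space \<mu>. 0 < FF (\<lambda>x. ff x - t) (Suc Q) x} \<in> sets \<mu>" by measurable
  then show ?thesis by (simp add: EE_def space_mu)
qed

lemma EE_in: "Sf m x > t * real m \<Longrightarrow> m \<le> Suc Q \<Longrightarrow> x \<in> EE t Q"
  using Sg_le[of m "Suc Q" "\<lambda>x. ff x - t" x] Sg_ff[of t m x] by (simp add: EE_def)

lemma EE_incseq: "incseq (EE t)"
proof (rule incseq_SucI)
  fix Q show "EE t Q \<subseteq> EE t (Suc Q)"
  proof
    fix x assume x: "x \<in> EE t Q"
    have "FF (\<lambda>x. ff x - t) (Suc Q) x \<le> FF (\<lambda>x. ff x - t) (Suc (Suc Q)) x" by (rule FF_mono)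
    then show "x \<in> EE t (Suc Q)" using x unfolding EE_def mem_Collect_eq by linarith
  qed
qed

lemma EE_measure:
  assumes t: "t > 0"
  shows "t * measure \<mu> (EE t Q) \<le> (\<integral>x. ff x \<partial>\<mu>)"
proof -
  interpret prob_space \<mu> by (rule mu_facts(1))
  have gi: "integrable \<mu> (\<lambda>x. ff x - t)" using ff_integrable by simp
  have Es: "EE t Q \<in> sets \<mu>" by (rule EE_sets)
  have i1: "integrable \<mu> (\<lambda>x. indicator (EE t Q) x * ff x)"
    using integrable_mult_indicator[OF Es ff_integrable] by simp
  have i2: "integrable \<mu> (\<lambda>x. indicator (EE t Q) x * t)"
    using integrable_mult_indicator[OF Es, of "\<lambda>x. t"] by simp
  have "0 \<le> (\<integral>x. indicator (EE t Q) x * (ff x - t) \<partial>\<mu>)"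
    using garsia[OF gi, of Q] by (simp add: EE_def)
  also have "\<dots> = (\<integral>x. indicator (EE t Q) x * ff x \<partial>\<mu>) - (\<integral>x. indicator (EE t Q) x * t \<partial>\<mu>)"
    using i1 i2 by (simp add: right_diff_distrib)
  also have "(\<integral>x. indicator (EE t Q) x * t \<partial>\<mu>) = t * measure \<mu> (EE t Q)"
    using Es by (simp add: space_mu mult.commute)
  also have "(\<integral>x. indicator (EE t Q) x * ff x \<partial>\<mu>) \<le> (\<integral>x. ff x \<partial>\<mu>)"
    using i1 ff_integrable by (intro integral_mono) (auto simp: ff_nonneg indicator_def)
  finally show ?thesis by simp
qed

lemma AE_Sf: "AE x in \<mu>. \<exists>M::nat. \<forall>m. Sf m x \<le> real M * real m"
proof -
  interpret prob_space \<mu> by (rule mu_facts(1))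
  define c where "c = (\<integral>x. ff x \<partial>\<mu>)"
  define Z where "Z = (\<Inter>M::nat. \<Union>Q. EE (real (Suc M)) Q)"
  have Zs: "Z \<in> sets \<mu>" unfolding Z_def using EE_sets by auto
  have bound: "measure \<mu> Z \<le> c / real (Suc M)" for M
  proof -
    define t where "t = real (Suc M)"
    have t0: "t > 0" by (simp add: t_def)
    have "emeasure \<mu> Z \<le> emeasure \<mu> (\<Union>Q. EE t Q)"
      unfolding Z_def t_def by (rule emeasure_mono) (auto intro: EE_sets)
    also have "\<dots> = (SUP Q. emeasure \<mu> (EE t Q))"
      by (rule SUP_emeasure_incseq[symmetric]) (auto intro: EE_sets EE_incseq)
    also have "\<dots> \<le> ennreal (c / t)"
    proof (rule SUP_least)
      fix Q
      have "measure \<mu> (EE t Q) \<le> c / t" using EE_measure[OF t0, of Q] t0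
        by (simp add: c_def field_simps)
      then show "emeasure \<mu> (EE t Q) \<le> ennreal (c / t)"
        by (simp add: emeasure_eq_measure ennreal_leI)
    qed
    finally have "emeasure \<mu> Z \<le> ennreal (c / t)" .
    then have "measure \<mu> Z \<le> c / t"
      using t0 by (simp add: emeasure_eq_measure)
        (metis c_def divide_nonneg_pos ennreal_le_iff integral_nonneg_AE AE_I2 ff_nonneg less_imp_le t0)
    then show ?thesis by (simp add: t_def)
  qed
  have "measure \<mu> Z = 0"
  proof (rule ccontr)
    assume "measure \<mu> Z \<noteq> 0"
    then have pos: "measure \<mu> Z > 0" using measure_nonneg[of \<mu> Z] by linarith
    obtain M :: nat where "c / measure \<mu> Z < real M" using reals_Archimedean2 by blast
    then have "c < real M * measure \<mu> Z" using pos by (simp add: field_simps)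
    also have "\<dots> < real (Suc M) * measure \<mu> Z" using pos by simp
    finally have "c / real (Suc M) < measure \<mu> Z" by (simp add: field_simps)
    then show False using bound[of M] by simp
  qed
  then have Zn: "Z \<in> null_sets \<mu>" using Zs by (simp add: emeasure_eq_measure null_sets_def)
  show ?thesis
  proof (rule AE_I'[OF Zn], safe)
    fix x assume "x \<in> space \<mu>" and nx: "\<nexists>M::nat. \<forall>m. Sf m x \<le> real M * real m"
    show "x \<in> Z"
    proof (unfold Z_def, intro InterI, safe)
      fix M :: nat
      obtain m where m: "Sf m x > real (Suc M) * real m" using nx by (meson not_le)
      then have "m \<noteq> 0" by (cases "m = 0") (auto simp: Sf_def)
      then obtain Q where "m = Suc Q" using not0_implies_Suc by blast
      then have "x \<in> EE (real (Suc M)) Q" using EE_in[OF m] by simp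
      then show "x \<in> (\<Union>Q. EE (real (Suc M)) Q)" by blast
    qed
  qed
qed

end

context pe begin

lemma k1_exists: "\<exists>k1\<ge>1. \<forall>k\<ge>k1. C0 * lam ^ k \<ge> 2"
proof -
  obtain k0 where k0: "2 / C0 < lam ^ k0" using real_arch_pow[OF lam] by blast
  show ?thesis
  proof (intro exI[of _ "max k0 1"] conjI allI impI)
    fix k assume "max k0 1 \<le> k"
    then have "lam ^ k0 \<le> lam ^ k" using lam by (intro power_increasing) auto
    then have "2 / C0 < lam ^ k" using k0 by linarith
    then show "C0 * lam ^ k \<ge> 2" using C0 by (simp add: field_simps)
  qed simp
qed

definition "k1 = (SOME k1. k1 \<ge> 1 \<and> (\<forall>k\<ge>k1. C0 * lam ^ k \<ge> 2))"

lemma k1: "k1 \<ge> 1" "k \<ge> k1 \<Longrightarrow> C0 * lam ^ k \<ge> 2"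
  using someI_ex[OF k1_exists] unfolding k1_def by blast+

definition "eps (M::nat) = 1 / (4 * (AA (real M) + 1))"
definition "rr (n::nat) = 2 * exp (- (3 / 4 * real n))"
definition "Kset M n = {k \<in> {..Suc n}. k1 \<le> k \<and> real k \<le> eps M * real (Suc n)}"
definition "Bad M n = (\<Union>k\<in>Kset M n. cover (real M) k (rr n))"

lemma eps_pos: "eps M > 0" "eps M \<le> 1 / 4"
  using AA_nonneg[of "real M"] by (auto simp: eps_def field_simps)

lemma piece_sub: "r \<ge> 0 \<Longrightarrow> piece M k r j \<subseteq> {- 2 * r .. 1 + 2 * r}"
proof -
  assume r: "r \<ge> 0"
  show ?thesis
  proof (cases "H M k r \<inter> cell M k j = {}")
    case True then show ?thesis by (simp add: piece_def)
  next
    case False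
    then have "ctr M k r j \<in> H M k r \<inter> cell M k j" unfolding ctr_def by (metis ex_in_conv someI)
    then have "ctr M k r j \<in> {0..1}" by (auto simp: H_def W_def)
    then show ?thesis using False by (auto simp: piece_def)
  qed
qed

lemma cover_sub: "r \<ge> 0 \<Longrightarrow> cover M k r \<subseteq> {- 2 * r .. 1 + 2 * r}"
  unfolding cover_def using piece_sub by blast

lemma rr_le: "rr n \<le> 2" "rr n > 0" by (auto simp: rr_def)

lemma Bad_sets: "Bad M n \<in> sets lborel"
  unfolding Bad_def by (intro sets.finite_UN) (auto simp: Kset_def cover_sets[simplified])

lemma Bad_sub: "Bad M n \<subseteq> {-4 .. 5}"
proof -
  have "cover (real M) k (rr n) \<subseteq> {-4 .. 5}" for k
    using cover_sub[of "rr n" "real M" k] rr_le[of n] by auto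
  then show ?thesis unfolding Bad_def by blast
qed

lemma Bad_fin: "emeasure lborel (Bad M n) < \<infinity>"
proof -
  have "emeasure lborel (Bad M n) \<le> emeasure lborel {-4 .. 5::real}"
    by (rule emeasure_mono[OF Bad_sub]) simp
  also have "\<dots> < \<infinity>" by simp
  finally show ?thesis .
qed

lemma Bad_measure: "measure lborel (Bad M n) \<le> 384 * exp (- 1 / 4) ^ n"
proof -
  define A where "A = AA (real M)"
  have A0: "A \<ge> 0" using AA_nonneg[of "real M"] by (simp add: A_def)
  have "measure lborel (Bad M n) \<le> (\<Sum>k\<in>Kset M n. measure lborel (cover (real M) k (rr n)))"
    unfolding Bad_def by (rule measure_UNION_le) (auto simp: Kset_def cover_sets[simplified])
  also have "\<dots> \<le> (\<Sum>k\<in>Kset M n. 96 * exp (- real n / 2))"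
  proof (rule sum_mono)
    fix k assume k: "k \<in> Kset M n"
    then have kb: "real k \<le> eps M * real (Suc n)" by (simp add: Kset_def)
    have "A * real k \<le> A * (eps M * real (Suc n))" using A0 kb by (intro mult_left_mono) auto
    also have "\<dots> = (A / (4 * (A + 1))) * real (Suc n)" by (simp add: eps_def A_def)
    also have "\<dots> \<le> (1 / 4) * real (Suc n)"
      using A0 by (intro mult_right_mono) (auto simp: field_simps)
    finally have Ak: "A * real k \<le> real (Suc n) / 4" by simp
    have "measure lborel (cover (real M) k (rr n)) \<le> 24 * rr n * exp (A * real k)"
      using cover_measure[of "real M" "rr n" k] rr_le[of n] by (simp add: A_def)
    also have "\<dots> \<le> 24 * rr n * exp (real (Suc n) / 4)"
      using Ak rr_le[of n] by (intro mult_left_mono) auto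
    also have "\<dots> = 48 * exp (1 / 4) * exp (- real n / 2)"
      by (simp add: rr_def mult_exp_exp[symmetric] del: mult_exp_exp) (simp add: algebra_simps exp_add[symmetric])
    also have "\<dots> \<le> 96 * exp (- real n / 2)"
    proof -
      have "exp (1 / 4 :: real) \<le> 2"
      proof -
        have e: "exp (1 / 4 :: real) ^ Suc 3 = exp 1"
          by (simp only: exp_of_nat_mult[symmetric]) simp
        have "exp (1 :: real) \<le> 3" using exp_le by simp
        then have "exp (1 / 4 :: real) ^ Suc 3 \<le> 2 ^ Suc 3" using e by simp
        then show ?thesis by (rule power_le_imp_le_base) simp
      qed
      then show ?thesis by simp
    qed
    finally show "measure lborel (cover (real M) k (rr n)) \<le> 96 * exp (- real n / 2)" .
  qed
  also have "\<dots> \<le> real (Suc (Suc n)) * (96 * exp (- real n / 2))"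
  proof -
    have "card (Kset M n) \<le> card {..Suc n}" by (rule card_mono) (auto simp: Kset_def)
    then have "card (Kset M n) \<le> Suc (Suc n)" by simp
    then show ?thesis by (simp add: mult_right_mono)
  qed
  also have "\<dots> \<le> 384 * exp (- 1 / 4) ^ n"
  proof -
    have "real (Suc (Suc n)) \<le> 4 * exp (real n / 4)"
      using exp_ge_add_one_self[of "real n / 4"] by linarith
    then have "real (Suc (Suc n)) * (96 * exp (- real n / 2)) \<le> 4 * exp (real n / 4) * (96 * exp (- real n / 2))"
      by (intro mult_right_mono) auto
    also have "\<dots> = 384 * exp (- 1 / 4) ^ n"
      by (simp add: exp_of_nat_mult[symmetric] mult_exp_exp)
    finally show ?thesis .
  qed
  finally show ?thesis .
qed

end

context pe begin

lemma AE_Bad: "AE x in \<mu>. \<forall>M::nat. eventually (\<lambda>n. x \<notin> Bad M n) sequentially"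
proof -
  have "AE x in \<mu>. eventually (\<lambda>n. x \<notin> Bad M n) sequentially" for M
  proof -
    have geo: "summable (\<lambda>n. 384 * exp (- 1 / 4 :: real) ^ n)"
      by (intro summable_mult summable_geometric) simp
    have sm: "summable (\<lambda>n. measure lborel (Bad M n))"
    proof (rule summable_comparison_test[OF _ geo])
      show "\<exists>N. \<forall>n\<ge>N. norm (measure lborel (Bad M n)) \<le> 384 * exp (- 1 / 4) ^ n"
        by (intro exI[of _ 0] allI impI) (simp only: real_norm_def abs_of_nonneg[OF measure_nonneg] Bad_measure)
    qed
    have "AE x in lborel. eventually (\<lambda>n. x \<in> space lborel - Bad M n) sequentially"
      by (rule borel_cantelli_AE1[OF Bad_sets Bad_fin sm])
    then have "AE x in lborel. eventually (\<lambda>n. x \<notin> Bad M n) sequentially" by simp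
    then show ?thesis by (rule AE_lborel_mu)
  qed
  then show ?thesis by (simp add: AE_all_countable)
qed

lemma funpow_fix: "(T ^^ k) x = x \<Longrightarrow> (T ^^ (k * j)) x = x"
proof (induction j)
  case 0 then show ?case by simp
next
  case (Suc j)
  have "(T ^^ (k * Suc j)) x = (T ^^ k) ((T ^^ (k * j)) x)" by (simp add: funpow_add)
  then show ?case using Suc by simp
qed

lemma AE_per: "AE x in \<mu>. \<forall>M::nat. \<forall>k. k \<ge> 1 \<longrightarrow> x \<in> W (real M) \<longrightarrow> (T ^^ k) x \<noteq> x"
proof -
  have "AE x in \<mu>. k \<ge> 1 \<longrightarrow> x \<in> W (real M) \<longrightarrow> (T ^^ k) x \<noteq> x" for M :: nat and k :: nat
  proof (cases "k \<ge> 1")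
    case False then show ?thesis by simp
  next
    case True
    define q where "q = k * k1"
    have q: "C0 * lam ^ q \<ge> 2" using True k1 by (intro k1(2)) (simp add: q_def)
    define Z where "Z = (\<Inter>j. cover (real M) q (1 / real (Suc j)))"
    have Zs: "Z \<in> sets lborel" unfolding Z_def using cover_sets by auto
    have sub: "{x \<in> W (real M). (T ^^ k) x = x} \<subseteq> Z"
    proof
      fix x assume x: "x \<in> {x \<in> W (real M). (T ^^ k) x = x}"
      then have fx: "(T ^^ q) x = x" unfolding q_def using funpow_fix by blast
      show "x \<in> Z" unfolding Z_def
      proof
        fix j :: nat
        have "x \<in> H (real M) q (1 / real (Suc j))" using x fx by (simp add: H_def)
        then show "x \<in> cover (real M) q (1 / real (Suc j))" using H_sub_cover[of "real M" q] q by auto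
      qed
    qed
    have Zsub: "Z \<subseteq> {-2 .. 3}"
    proof -
      have "cover (real M) q 1 \<subseteq> {-2 .. 3}" using cover_sub[of 1 "real M" q] by simp
      moreover have "Z \<subseteq> cover (real M) q 1"
      proof
        fix x assume "x \<in> Z"
        then have "x \<in> cover (real M) q (1 / real (Suc 0))" unfolding Z_def by blast
        then show "x \<in> cover (real M) q 1" by simp
      qed
      ultimately show ?thesis by blast
    qed
    have Zfin: "emeasure lborel Z < \<infinity>"
    proof -
      have "emeasure lborel Z \<le> emeasure lborel {-2 .. 3::real}" by (rule emeasure_mono[OF Zsub]) simp
      then show ?thesis by (simp add: le_less_trans)
    qed
    define c where "c = 24 * exp (AA (real M) * real q)"
    have bound: "measure lborel Z \<le> c / real (Suc j)" for j
    proof -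
      have cf: "cover (real M) q (1 / real (Suc j)) \<in> fmeasurable lborel"
      proof -
        define r where "r = 1 / real (Suc j)"
        have r1: "r \<le> 1" "r \<ge> 0" by (auto simp: field_simps r_def)
        then have "{- 2 * r .. 1 + 2 * r} \<subseteq> {-2 .. 3}" by auto
        then have "cover (real M) q r \<subseteq> {-2 .. 3}"
          using cover_sub[of r "real M" q] r1 by blast
        then have "cover (real M) q (1 / real (Suc j)) \<subseteq> {-2 .. 3}" by (simp add: r_def)
        then have "emeasure lborel (cover (real M) q (1 / real (Suc j))) \<le> emeasure lborel {-2 .. 3::real}"
          by (rule emeasure_mono) simp
        then show ?thesis using cover_sets by (auto simp: fmeasurable_def le_less_trans)
      qed
      have "measure lborel Z \<le> measure lborel (cover (real M) q (1 / real (Suc j)))"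
        by (rule measure_mono_fmeasurable[OF _ Zs cf]) (auto simp: Z_def)
      also have "\<dots> \<le> 24 * (1 / real (Suc j)) * exp (AA (real M) * real q)"
        by (rule cover_measure) auto
      also have "\<dots> = c / real (Suc j)" by (simp add: c_def)
      finally show ?thesis .
    qed
    have "measure lborel Z = 0"
    proof (rule ccontr)
      assume "measure lborel Z \<noteq> 0"
      then have pos: "measure lborel Z > 0" using measure_nonneg[of lborel Z] by linarith
      obtain j :: nat where "c / measure lborel Z < real j" using reals_Archimedean2 by blast
      then have "c < real j * measure lborel Z" using pos by (simp add: field_simps)
      also have "\<dots> < real (Suc j) * measure lborel Z" using pos by simp
      finally have "c / real (Suc j) < measure lborel Z" by (simp add: field_simps)
      then show False using bound[of j] by simp
    qed
    moreover have "emeasure lborel Z = ennreal (measure lborel Z)"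
      using Zfin by (intro emeasure_eq_ennreal_measure) simp
    ultimately have "emeasure lborel Z = 0" by simp
    then have "Z \<in> null_sets lborel" using Zs by (simp add: null_sets_def)
    then have "AE x in lborel. x \<notin> Z" by (rule AE_not_in)
    then have "AE x in lborel. k \<ge> 1 \<longrightarrow> x \<in> W (real M) \<longrightarrow> (T ^^ k) x \<noteq> x"
      by eventually_elim (use sub in blast)
    then show ?thesis by (rule AE_lborel_mu)
  qed
  then show ?thesis by (simp add: AE_all_countable)
qed

end

context pe begin

lemma dioph_point:
  fixes M :: nat
  assumes x: "x \<in> {0..1}" and orb: "\<forall>l. (T ^^ l) x \<notin> S"
    and Mn: "\<forall>m. Sf m x \<le> real M * real m"
    and ev: "eventually (\<lambda>n. x \<notin> Bad M n) sequentially"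
    and per: "\<forall>k. k \<ge> 1 \<longrightarrow> x \<in> W (real M) \<longrightarrow> (T ^^ k) x \<noteq> x"
  shows "diophantine T x"
proof -
  have xW: "x \<in> W (real M)" using x orb Mn by (simp add: W_def)
  define A where "A = AA (real M)"
  define B where "B = BB (real M)"
  have A0: "A \<ge> 0" using AA_nonneg[of "real M"] by (simp add: A_def)
  have BA: "B \<le> A" by (simp add: A_def B_def AA_def)
  define \<epsilon> where "\<epsilon> = eps M"
  have e0: "\<epsilon> > 0" using eps_pos by (simp add: \<epsilon>_def)
  obtain n0 where n0: "\<And>n. n \<ge> n0 \<Longrightarrow> x \<notin> Bad M n" using ev by (auto simp: eventually_sequentially)
  define D where "D k = \<bar>(T ^^ k) x - x\<bar>" for k
  define \<delta>0 where "\<delta>0 = Min (D ` {1..<k1} \<union> {1})"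
  have \<delta>0_pos: "\<delta>0 > 0"
  proof -
    have "\<forall>d \<in> D ` {1..<k1} \<union> {1}. d > 0"
      using per xW by (auto simp: D_def)
    then show ?thesis unfolding \<delta>0_def by (subst Min_gr_iff) auto
  qed
  have \<delta>0_le: "\<delta>0 \<le> D k" if "1 \<le> k" "k < k1" for k
    unfolding \<delta>0_def using that by (intro Min_le) auto
  define L0 where "L0 = max (max 2 (real n0 + 1)) (2 * ln (2 / \<delta>0))"
  define \<rho>0 where "\<rho>0 = exp (- L0)"
  have r00: "\<rho>0 > 0" by (simp add: \<rho>0_def)
  have main: "{y \<in> {0..1}. (T ^^ k) y \<in> ball x \<rho>} \<inter> ball x \<rho> = {}"
    if \<rho>: "0 < \<rho> \<and> \<rho> \<le> \<rho>0" and k: "0 < k \<and> real k \<le> \<epsilon> * \<bar>ln \<rho>\<bar>" for \<rho> k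
  proof -
    define L where "L = - ln \<rho>"
    have \<rho>L: "\<rho> = exp (- L)" using \<rho> by (simp add: L_def)
    have "ln \<rho> \<le> ln \<rho>0" using \<rho> r00 by (subst ln_le_cancel_iff) auto
    then have LL0: "L \<ge> L0" by (simp add: L_def \<rho>0_def)
    have L2: "L \<ge> 2" using LL0 by (simp add: L0_def)
    have Ln0: "L \<ge> real n0 + 1" using LL0 by (simp add: L0_def)
    have Ld: "L \<ge> 2 * ln (2 / \<delta>0)" using LL0 by (simp add: L0_def)
    have absL: "\<bar>ln \<rho>\<bar> = L" using L2 by (simp add: L_def)
    have kL: "real k \<le> \<epsilon> * L" using k absL by simp
    have Ak: "A * real k \<le> L / 4"
    proof -
      have "A * real k \<le> A * (\<epsilon> * L)" using kL A0 by (intro mult_left_mono) auto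
      also have "\<dots> = (A / (4 * (A + 1))) * L" by (simp add: \<epsilon>_def eps_def A_def)
      also have "\<dots> \<le> (1 / 4) * L" using A0 L2 by (intro mult_right_mono) (auto simp: field_simps)
      finally show ?thesis by simp
    qed
    have rhoexp: "\<rho> * exp (A * real k) \<le> exp (- 3 / 4 * L)"
    proof -
      have "\<rho> * exp (A * real k) \<le> exp (- L) * exp (L / 4)"
        unfolding \<rho>L using Ak by (intro mult_left_mono) auto
      also have "\<dots> = exp (- 3 / 4 * L)" by (simp add: mult_exp_exp)
      finally show ?thesis .
    qed
    have half: "exp (- 3 / 4 * L) < 1 / 2"
    proof -
      have "exp (- 3 / 4 * L) \<le> exp (- 3 / 2)" using L2 by simp
      also have "exp (3 / 2 :: real) > 2" using exp_ge_add_one_self[of "3 / 2 :: real"] by linarith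
      then have "exp (- 3 / 2 :: real) < 1 / 2" by (simp add: exp_minus field_simps)
      finally show ?thesis .
    qed
    show "{y \<in> {0..1}. (T ^^ k) y \<in> ball x \<rho>} \<inter> ball x \<rho> = {}"
    proof (rule ccontr)
      assume "{y \<in> {0..1}. (T ^^ k) y \<in> ball x \<rho>} \<inter> ball x \<rho> \<noteq> {}"
      then obtain y where y0: "y \<in> {0..1}" "\<bar>x - (T ^^ k) y\<bar> < \<rho>" "\<bar>x - y\<bar> < \<rho>"
        unfolding ball_def dist_real_def by blast
      then have y: "y \<in> {0..1}" "\<bar>(T ^^ k) y - x\<bar> < \<rho>" "\<bar>y - x\<bar> < \<rho>"
        by (simp_all add: abs_minus_commute)
      have Mr: "real M \<ge> 0" by simp
      have "\<bar>(T ^^ k) y - (T ^^ k) x\<bar> \<le> \<rho> * exp (B * real k)"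
        using good_G(1)[OF x orb Mr Mn _ _ y(1), of \<rho> k] y(3) \<rho> rhoexp half
        by (simp add: A_def B_def)
      also have "\<dots> \<le> \<rho> * exp (A * real k)"
        using BA \<rho> by (intro mult_left_mono) (auto intro: mult_right_mono)
      also have "\<dots> \<le> exp (- 3 / 4 * L)" by (rule rhoexp)
      finally have c1: "\<bar>(T ^^ k) y - (T ^^ k) x\<bar> \<le> exp (- 3 / 4 * L)" .
      have "\<rho> \<le> exp (- 3 / 4 * L)" using \<rho>L L2 by simp
      then have Dk: "D k < 2 * exp (- 3 / 4 * L)" using c1 y(2) by (simp add: D_def)
      show False
      proof (cases "k < k1")
        case True
        have "exp (- 3 / 4 * L) \<le> exp (- L / 2)" using L2 by simp
        also have "exp (- L / 2) \<le> \<delta>0 / 2"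
        proof -
          have "ln (2 / \<delta>0) \<le> L / 2" using Ld by simp
          then have "exp (ln (2 / \<delta>0)) \<le> exp (L / 2)" by simp
          then have "2 / \<delta>0 \<le> exp (L / 2)" using \<delta>0_pos by simp
          then show ?thesis using \<delta>0_pos by (simp add: exp_minus field_simps)
        qed
        finally have "D k < \<delta>0" using Dk by simp
        then show False using \<delta>0_le[of k] True k by simp
      next
        case False
        then have kk1: "k \<ge> k1" by simp
        define n where "n = nat \<lfloor>L\<rfloor>"
        have fl: "\<lfloor>L\<rfloor> \<ge> 0" using L2 by simp
        have rn: "real n = of_int \<lfloor>L\<rfloor>" using fl by (simp add: n_def)
        have nL: "real n \<le> L" "L < real n + 1" unfolding rn by linarith+
        have nn0: "n \<ge> n0" using nL Ln0 by linarith
        have kS: "k \<in> Kset M n"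
        proof -
          have "real k \<le> \<epsilon> * L" by (rule kL)
          also have "\<dots> \<le> \<epsilon> * real (Suc n)" using nL e0 by (intro mult_left_mono) auto
          finally have k1': "real k \<le> eps M * real (Suc n)" by (simp add: \<epsilon>_def)
          have "eps M * real (Suc n) \<le> real (Suc n)"
            by (rule mult_left_le_one_le) (use eps_pos[of M] in auto)
          then have "real k \<le> real (Suc n)" using k1' by linarith
          then have "k \<le> Suc n" by linarith
          then show ?thesis using kk1 k1' by (simp add: Kset_def)
        qed
        have "x \<notin> Bad M n" using n0 nn0 by blast
        then have "x \<notin> cover (real M) k (rr n)" using kS by (auto simp: Bad_def)
        then have "x \<notin> H (real M) k (rr n)" using H_sub_cover[of "real M" k "rr n"] k1(2)[OF kk1] by auto
        then have "D k \<ge> rr n" using xW by (auto simp: H_def D_def)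
        moreover have "2 * exp (- 3 / 4 * L) \<le> rr n"
        proof -
          have "- 3 / 4 * L \<le> - (3 / 4 * real n)" using nL by linarith
          then show ?thesis unfolding rr_def by simp
        qed
        ultimately show False using Dk by simp
      qed
    qed
  qed
  show ?thesis unfolding diophantine_def using e0 r00 main by blast
qed

end

theorem proposition4p5:
  fixes T :: "real \<Rightarrow> real" and a :: "nat \<Rightarrow> real" and N :: enat and \<mu> :: "real measure"
  assumes "piecewise_expanding T a N"
    and "PE1 T a N" and "PE2 T a N"
    and "acip_ergodic T \<mu>"
    and "PE3 T \<mu>" and "PE4 \<mu> (sing_set a N)"
  shows "AE x in \<mu>. diophantine T x"
proof -
  from assms(1) have sp: "sing_points_ok a N" and TI: "\<forall>x\<in>{0..1}. T x \<in> {0..1}"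
    and C3: "\<forall>j. enat j < N \<longrightarrow> C3_on T (branch a j)"
    and ex: "\<exists>C>0. \<exists>lam>1. \<forall>n x. (\<forall>i<n. (T ^^ i) x \<in> {0..1} - sing_set a N) \<longrightarrow>
            \<bar>deriv (T ^^ n) x\<bar> \<ge> C * lam ^ n"
    unfolding piecewise_expanding_def by blast+
  obtain C0 lam where C0: "C0 > 0" "lam > 1" and exp: "\<forall>n x. (\<forall>i<n. (T ^^ i) x \<in> {0..1} - sing_set a N) \<longrightarrow>
            \<bar>deriv (T ^^ n) x\<bar> \<ge> C0 * lam ^ n" using ex by blast
  obtain C1 where C1: "C1 > 0" "\<forall>j. enat j < N \<longrightarrow> (\<forall>x\<in>branch a j.
      \<bar>deriv (deriv T) x\<bar> / \<bar>deriv T x\<bar>^2 < C1)" using assms(2) unfolding PE1_def by blast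
  obtain Cp gam where Cp: "Cp > 0" "gam > 0" "\<forall>e>0. measure \<mu> {x. infdist x (sing_set a N) < e} < Cp * e powr gam"
    using assms(6) unfolding PE4_def by blast
  interpret pe T a N \<mu> C0 lam C1 Cp gam
    using sp TI C3 C0 exp C1 assms(4) Cp by unfold_locales auto
  show ?thesis using AE_I AE_orbit AE_Sf AE_Bad AE_per
  proof eventually_elim
    case (elim x)
    then obtain M :: nat where "\<forall>m. Sf m x \<le> real M * real m" by blast
    then show ?case using elim by (intro dioph_point[of x M]) auto
  qed
qed

end
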